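(* Let $(a_\nu,b_\nu)_{\nu\ge1}$ be a sequence in $P$ converging to $(a,b)\in\mathbb{R}^2$. If the sequence $N(a_\nu,b_\nu)$ is bounded and $(a,b)\ne(0,-1)$, then $(a,b)\notin P'$. If in addition $(a,b)\in P$, then $N(a,b)\le\sup_\nu N(a_\nu,b_\nu)$.
   Context: Let $P$ be the set of $(a,b)\in\mathbb{R}^2$ such that $h(x)=x^2+ax+b$ has no multiple root and $h(x)>0$ for all real $x$ with $|x|\ge1$ (equivalently: $a^2<4b$, or $a^2>4b$ and $|a|<\min\{2,b+1\}$). Let $P'=\{(a,b)\in\mathbb{R}^2: a^2=4b\ge4\}\cup\{(a,b)\in\mathbb{R}^2:|a|=b+1\le2\}$. For $(a,b)\in P$ let $C_{a,b}$ be the affine curve $y^2+(x^2-1)(x^2+ax+b)=0$, $\mathbb{R}[C_{a,b}]=\mathbb{R}[x,y]/(y^2+(x^2-1)(x^2+ax+b))$. For $g=u(x)+v(x)y$ put $\delta(g)=\max\{\deg u,\deg v+2\}$, and for $0\ne g$ let $\theta(g)$ be the least integer $e\ge0$ with $g=\sum_i g_i^2$, $g_i\in\mathbb{R}[C_{a,b}]$, $\delta(g_i)\le e$. Define $N(a,b):=\theta(1-x^2)$ computed in $\mathbb{R}[C_{a,b}]$. Equivalently, $N(a,b)=2+\frac12\deg t$ where $s,t\in\mathbb{R}[x]$ are sums of squares with $1=t(x)(x^2+ax+b)-s(x)(x^2-1)$ and $\deg s=\deg t$ as small as possible. *)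

theory Defs
  imports "HOL-Analysis.Analysis" "HOL-Computational_Algebra.Polynomial"
begin

text \<open>The set P: h(x) = x^2 + a x + b has no multiple root and h(x) > 0 for |x| >= 1.
  For the monic quadratic h, having a multiple root means a^2 = 4 b.\<close>
definition P_set :: "(real \<times> real) set" where
  "P_set = {(a, b). a\<^sup>2 \<noteq> 4 * b \<and> (\<forall>x::real. \<bar>x\<bar> \<ge> 1 \<longrightarrow> x\<^sup>2 + a * x + b > 0)}"

definition P'_set :: "(real \<times> real) set" where
  "P'_set = {(a, b). a\<^sup>2 = 4 * b \<and> 4 * b \<ge> 4} \<union> {(a, b). \<bar>a\<bar> = b + 1 \<and> b + 1 \<le> 2}"

text \<open>Elements of R[C_{a,b}] = R[x,y]/(y^2 + (x^2-1)(x^2+ax+b)) are written uniquely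
  as u(x) + v(x) y, represented by the pair (u, v).  In R[C], y^2 = -(x^2-1) h(x).\<close>
definition hpoly :: "real \<Rightarrow> real \<Rightarrow> real poly" where
  "hpoly a b = [:b, a, 1:]"

definition ysq :: "real \<Rightarrow> real \<Rightarrow> real poly" where
  "ysq a b = - ([:-1, 0, 1:] * hpoly a b)"

definition sq_C :: "real \<Rightarrow> real \<Rightarrow> real poly \<times> real poly \<Rightarrow> real poly \<times> real poly" where
  "sq_C a b g = (fst g * fst g + snd g * snd g * ysq a b, 2 * fst g * snd g)"

text \<open>delta(u + v y) = max(deg u, deg v + 2), with the zero polynomial contributing
  nothing (its degree is -infinity); values are compared against e >= 0.\<close>
definition delta_C :: "real poly \<times> real poly \<Rightarrow> nat" where
  "delta_C g = max (degree (fst g)) (if snd g = 0 then 0 else degree (snd g) + 2)"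

definition sos_deg_C :: "real \<Rightarrow> real \<Rightarrow> nat \<Rightarrow> real poly \<times> real poly \<Rightarrow> bool" where
  "sos_deg_C a b e f \<longleftrightarrow> (\<exists>gs :: (real poly \<times> real poly) list.
      (\<forall>g\<in>set gs. delta_C g \<le> e) \<and>
      sum_list (map (\<lambda>g. fst (sq_C a b g)) gs) = fst f \<and>
      sum_list (map (\<lambda>g. snd (sq_C a b g)) gs) = snd f)"

definition theta_C :: "real \<Rightarrow> real \<Rightarrow> real poly \<times> real poly \<Rightarrow> nat" where
  "theta_C a b f = (LEAST e. sos_deg_C a b e f)"

definition N_ab :: "real \<Rightarrow> real \<Rightarrow> nat" where
  "N_ab a b = theta_C a b ([:1, 0, -1:], 0)"

end

theory Submission
  imports Defs "HOL-Computational_Algebra.Fundamental_Theorem_Algebra"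
begin


lemma map_poly_of_real_add:
  "map_poly (of_real :: real \<Rightarrow> complex) (p + q) = map_poly of_real p + map_poly of_real q"
  by (rule poly_eqI) (simp add: coeff_map_poly)

lemma map_poly_of_real_mult:
  "map_poly (of_real :: real \<Rightarrow> complex) (p * q) = map_poly of_real p * map_poly of_real q"
  by (rule poly_eqI) (simp add: coeff_map_poly coeff_mult of_real_sum)

lemma poly_map_of_real_real:
  "poly (map_poly (of_real :: real \<Rightarrow> complex) p) (of_real x) = of_real (poly p x)"
  by (induction p) (auto simp: map_poly_pCons)

lemma sum_sq_scale:
  "sum_list (map (\<lambda>q. (c*q)*(c*q)) ds) = c*c* sum_list (map (\<lambda>q. q*q) ds)"
  for c :: "real poly"
  by (induction ds) (auto simp: algebra_simps)

lemma poly_sum_sq_nonneg: "poly (sum_list (map (\<lambda>q. q*q) ds)) x \<ge> (0::real)"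
  by (induction ds) (auto simp: poly_sum_list)

lemma sign_near:
  fixes q :: "real poly"
  assumes "poly q r > 0"
  shows "\<exists>d>0. \<forall>y. \<bar>y - r\<bar> < d \<longrightarrow> poly q y > 0"
proof -
  have "((\<lambda>x. poly q x) \<longlongrightarrow> poly q r) (at r)"
    using poly_isCont isCont_def by blast
  hence "eventually (\<lambda>x. 0 < poly q x) (at r)" using assms order_tendstoD(1) by blast
  then obtain d where d: "d > 0" "\<forall>x. x \<noteq> r \<and> dist x r < d \<longrightarrow> 0 < poly q x"
    unfolding eventually_at by blast
  show ?thesis using d assms by (auto simp: dist_real_def)
qed

definition sosl :: "real poly list \<Rightarrow> real poly \<Rightarrow> bool" where
  "sosl ps p \<longleftrightarrow> p = sum_list (map (\<lambda>q. q*q) ps) \<and> (\<forall>q\<in>set ps. 2 * degree q \<le> degree p)"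

lemma sosl_scale:
  assumes "sosl ds D" "2 * degree c + degree D \<le> n"
  shows "sum_list (map (\<lambda>q. q*q) (map (\<lambda>q. c*q) ds)) = c*c*D \<and> (\<forall>q\<in>set (map (\<lambda>q. c*q) ds). 2 * degree q \<le> n)"
proof -
  have "sum_list (map (\<lambda>q. q*q) (map (\<lambda>q. c*q) ds)) = c*c*D"
    using assms(1) sum_sq_scale[of c ds] by (simp add: sosl_def o_def)
  moreover have "2 * degree (c*q) \<le> n" if "q \<in> set ds" for q
  proof -
    have "degree (c*q) \<le> degree c + degree q" by (rule degree_mult_le)
    thus ?thesis using assms(1,2) that unfolding sosl_def by auto
  qed
  ultimately show ?thesis by auto
qed

lemma root_sq_factor:
  fixes p :: "real poly"
  assumes nn: "\<forall>x. poly p x \<ge> 0" and r: "poly p r = 0"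
  shows "\<exists>p2. p = [:-r,1:] * [:-r,1:] * p2 \<and> (\<forall>x. poly p2 x \<ge> 0)"
proof -
  obtain p1 where p1: "p = [:-r,1:] * p1" using r poly_eq_0_iff_dvd by (metis dvdE)
  have "poly p1 r = 0"
  proof (rule ccontr)
    assume ne: "poly p1 r \<noteq> 0"
    show False
    proof (cases "poly p1 r > 0")
      case True
      then obtain d where d: "d > 0" "\<forall>y. \<bar>y - r\<bar> < d \<longrightarrow> poly p1 y > 0" using sign_near by blast
      have "poly p1 (r - d/2) > 0" using d by auto
      hence "poly p (r - d/2) < 0" using d(1) by (simp add: p1 mult_neg_pos)
      thus False using nn by (metis not_le)
    next
      case False
      hence "poly (-p1) r > 0" using ne by simp
      then obtain d where d: "d > 0" "\<forall>y. \<bar>y - r\<bar> < d \<longrightarrow> poly (-p1) y > 0" using sign_near by blast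
      have "poly p1 (r + d/2) < 0" using d by auto
      hence "poly p (r + d/2) < 0" using d(1) by (simp add: p1 mult_pos_neg)
      thus False using nn by (metis not_le)
    qed
  qed
  then obtain p2 where p2: "p1 = [:-r,1:] * p2" using poly_eq_0_iff_dvd by (metis dvdE)
  have pp: "p = [:-r,1:] * [:-r,1:] * p2" by (simp only: p1 p2 mult.assoc)
  have ev: "poly p x = (x - r)^2 * poly p2 x" for x by (simp add: pp power2_eq_square algebra_simps)
  have nn2: "poly p2 y \<ge> 0" if "y \<noteq> r" for y
  proof -
    have "(y - r)^2 > 0" using that by simp
    moreover have "(y-r)^2 * poly p2 y \<ge> 0" using nn ev by metis
    ultimately show ?thesis by (simp add: zero_le_mult_iff)
  qed
  have "poly p2 r \<ge> 0"
  proof (rule ccontr)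
    assume "\<not> poly p2 r \<ge> 0"
    hence "poly (-p2) r > 0" by simp
    then obtain d where d: "d > 0" "\<forall>y. \<bar>y - r\<bar> < d \<longrightarrow> poly (-p2) y > 0" using sign_near by blast
    have "poly p2 (r + d/2) < 0" using d by auto
    thus False using nn2[of "r + d/2"] d(1) by simp
  qed
  hence "\<forall>x. poly p2 x \<ge> 0" using nn2 by metis
  thus ?thesis using pp by blast
qed

lemma no_root_quad_factor:
  fixes p :: "real poly"
  assumes nr: "\<forall>x. poly p x \<noteq> 0" and dg: "degree p > 0"
  shows "\<exists>\<alpha> \<beta> D. \<beta> \<noteq> 0 \<and> p = [:\<alpha>^2 + \<beta>^2, -2*\<alpha>, 1:] * D"
proof -
  define pc where "pc = map_poly (of_real :: real \<Rightarrow> complex) p"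
  have "degree pc = degree p" unfolding pc_def by (rule degree_map_poly) simp
  then obtain z where z: "poly pc z = 0" using dg alg_closed_imp_poly_has_root by metis
  have imz: "Im z \<noteq> 0"
  proof
    assume "Im z = 0"
    hence "z = of_real (Re z)" by (simp add: complex_eq_iff)
    hence "of_real (poly p (Re z)) = (0::complex)" using z poly_map_of_real_real unfolding pc_def by metis
    thus False using nr by simp
  qed
  define Q where "Q = [:(Re z)^2 + (Im z)^2, -2*Re z, 1:]"
  define D where "D = p div Q"
  define R where "R = p mod Q"
  have Qnz: "Q \<noteq> 0" unfolding Q_def by simp
  have dQ: "degree Q = 2" unfolding Q_def by simp
  have pdec: "p = Q * D + R" unfolding D_def R_def by (simp add: mult.commute)
  have Rform: "R = [:coeff R 0, coeff R 1:]"
  proof (rule poly_eqI)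
    fix n
    have "R = 0 \<or> degree R < 2" using degree_mod_less[OF Qnz, of p] dQ unfolding R_def by simp
    hence "n \<ge> 2 \<Longrightarrow> coeff R n = 0" by (metis coeff_0 coeff_eq_0 less_le_trans)
    thus "coeff R n = coeff [:coeff R 0, coeff R 1:] n"
      by (cases n; cases "n - 1") (auto simp: coeff_pCons)
  qed
  have Qz: "poly (map_poly (of_real :: real \<Rightarrow> complex) Q) z = 0"
    unfolding Q_def by (simp add: map_poly_pCons complex_eq_iff power2_eq_square algebra_simps)
  have "poly pc z = poly (map_poly of_real Q) z * poly (map_poly of_real D) z + poly (map_poly of_real R) z"
    unfolding pc_def by (subst pdec) (simp add: map_poly_of_real_add map_poly_of_real_mult)
  hence Rz: "poly (map_poly (of_real :: real \<Rightarrow> complex) R) z = 0" using z Qz by simp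
  hence "of_real (coeff R 0) + of_real (coeff R 1) * z = (0::complex)"
    by (subst (asm) Rform) (simp add: map_poly_pCons mult.commute)
  hence "coeff R 1 * Im z = 0" "coeff R 0 + coeff R 1 * Re z = 0" by (simp_all add: complex_eq_iff)
  hence "coeff R 1 = 0" "coeff R 0 = 0" using imz by auto
  hence "R = 0" using Rform by simp
  hence "p = Q * D" using pdec by simp
  thus ?thesis using imz unfolding Q_def by blast
qed

lemma nonneg_sosl:
  fixes p :: "real poly"
  assumes "\<forall>x. poly p x \<ge> 0"
  shows "\<exists>ps. sosl ps p"
  using assms
proof (induction "degree p" arbitrary: p rule: less_induct)
  case less
  show ?case
  proof (cases "p = 0")
    case True
    thus ?thesis by (rule_tac x="[]" in exI) (simp add: sosl_def)
  next
    case pnz: False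
    show ?thesis
    proof (cases "\<exists>r. poly p r = 0")
      case True
      then obtain r where r: "poly p r = 0" by blast
      obtain p2 where p2: "p = [:-r,1:] * [:-r,1:] * p2" "\<forall>x. poly p2 x \<ge> 0"
        using root_sq_factor[OF less.prems r] by blast
      have p2nz: "p2 \<noteq> 0" using pnz p2 by auto
      have dp: "degree p = 2 + degree p2" using p2nz unfolding p2(1)
        by (subst degree_mult_eq; simp)+
      obtain ds where ds: "sosl ds p2" using less.hyps[of p2] dp p2(2) by auto
      have "sum_list (map (\<lambda>q. q*q) (map (\<lambda>q. [:-r,1:]*q) ds)) = [:-r,1:]*[:-r,1:]*p2 \<and>
          (\<forall>q\<in>set (map (\<lambda>q. [:-r,1:]*q) ds). 2 * degree q \<le> degree p)"
        by (rule sosl_scale[OF ds]) (simp add: dp)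
      thus ?thesis using p2(1) unfolding sosl_def by metis
    next
      case False
      hence nr: "\<forall>x. poly p x \<noteq> 0" by blast
      show ?thesis
      proof (cases "degree p = 0")
        case True
        then obtain c where c: "p = [:c:]" by (metis degree_eq_zeroE)
        have "c \<ge> 0" using less.prems c by (metis poly_pCons poly_0 mult_zero_right add_0_right)
        hence "p = [:sqrt c:] * [:sqrt c:]" using c by simp
        thus ?thesis by (rule_tac x="[[:sqrt c:]]" in exI) (simp add: sosl_def)
      next
        case False
        then obtain \<alpha> \<beta> D where AD: "\<beta> \<noteq> 0" "p = [:\<alpha>^2 + \<beta>^2, -2*\<alpha>, 1:] * D"
          using no_root_quad_factor[OF nr] by auto
        have Qpos: "poly [:\<alpha>^2 + \<beta>^2, -2*\<alpha>, 1:] x > 0" for x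
        proof -
          have "poly [:\<alpha>^2 + \<beta>^2, -2*\<alpha>, 1:] x = (x - \<alpha>)^2 + \<beta>^2" by (simp add: algebra_simps power2_eq_square)
          moreover have "\<beta>^2 > 0" "(x-\<alpha>)^2 \<ge> 0" using AD(1) by simp_all
          ultimately show ?thesis by linarith
        qed
        have Dnn: "\<forall>x. poly D x \<ge> 0"
        proof
          fix x
          have "poly [:\<alpha>^2 + \<beta>^2, -2*\<alpha>, 1:] x * poly D x \<ge> 0" using less.prems AD(2) by (metis poly_mult)
          thus "poly D x \<ge> 0" using Qpos[of x] by (simp add: zero_le_mult_iff)
        qed
        have Dnz: "D \<noteq> 0" using pnz AD by auto
        have dp: "degree p = 2 + degree D" using Dnz unfolding AD(2) by (subst degree_mult_eq) auto
        obtain ds where ds: "sosl ds D" using less.hyps[of D] dp Dnn by auto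
        have s1: "sum_list (map (\<lambda>q. q*q) (map (\<lambda>q. [:-\<alpha>,1:]*q) ds)) = [:-\<alpha>,1:]*[:-\<alpha>,1:]*D \<and>
          (\<forall>q\<in>set (map (\<lambda>q. [:-\<alpha>,1:]*q) ds). 2 * degree q \<le> degree p)"
          by (rule sosl_scale[OF ds]) (simp add: dp)
        have s2: "sum_list (map (\<lambda>q. q*q) (map (\<lambda>q. [:\<beta>:]*q) ds)) = [:\<beta>:]*[:\<beta>:]*D \<and>
          (\<forall>q\<in>set (map (\<lambda>q. [:\<beta>:]*q) ds). 2 * degree q \<le> degree p)"
          by (rule sosl_scale[OF ds]) (simp add: dp)
        have qq: "[:-\<alpha>,1:]*[:-\<alpha>,1:] + [:\<beta>:]*[:\<beta>:] = [:\<alpha>^2 + \<beta>^2, -2*\<alpha>, 1:]"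
          by (simp add: power2_eq_square)
        have "[:-\<alpha>,1:]*[:-\<alpha>,1:]*D + [:\<beta>:]*[:\<beta>:]*D = p"
          unfolding AD(2) qq[symmetric] by (simp only: distrib_right)
        hence "p = sum_list (map (\<lambda>q. q*q) (map (\<lambda>q. [:-\<alpha>,1:]*q) ds @ map (\<lambda>q. [:\<beta>:]*q) ds))"
          using s1 s2 by (simp only: map_append sum_list_append)
        moreover have "\<forall>q\<in>set (map (\<lambda>q. [:-\<alpha>,1:]*q) ds @ map (\<lambda>q. [:\<beta>:]*q) ds). 2 * degree q \<le> degree p"
          using s1 s2 by (simp only: set_append Un_iff) blast
        ultimately show ?thesis unfolding sosl_def by blast
      qed
    qed
  qed
qed

definition goodST :: "real \<Rightarrow> real \<Rightarrow> nat \<Rightarrow> real poly \<Rightarrow> real poly \<Rightarrow> bool" where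
  "goodST a b e S T \<longleftrightarrow> (\<forall>x. poly S x \<ge> 0) \<and> (\<forall>x. poly T x \<ge> 0) \<and> degree S \<le> 2*e \<and>
     S + [:1,0,-1:] * hpoly a b * T = [:1,0,-1:]"

lemma ysq_alt: "ysq a b = [:1,0,-1:] * hpoly a b"
proof -
  have "[:1,0,-1:] = - [:-1,0,1::real:]" by simp
  thus ?thesis unfolding ysq_def by simp
qed

lemma sum_fst_sq:
  "sum_list (map (\<lambda>g. fst (sq_C a b g)) gs) =
   sum_list (map (\<lambda>g. fst g * fst g) gs) + [:1,0,-1:] * hpoly a b * sum_list (map (\<lambda>g. snd g * snd g) gs)"
  by (induction gs) (auto simp: sq_C_def ysq_alt algebra_simps)

lemma sum_snd_sq_split:
  "sum_list (map (\<lambda>g. snd (sq_C a b g)) (map (\<lambda>p. (p,0)) ps @ map (\<lambda>q. (0,q)) qs)) = 0"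
  by (induction ps) (auto simp: sq_C_def, induction qs, auto)

lemma degree_sum_sq_le:
  assumes "\<forall>g\<in>set gs. degree (f g) \<le> e"
  shows "degree (sum_list (map (\<lambda>g. f g * f g) gs)) \<le> 2*e"
  using assms
proof (induction gs)
  case Nil thus ?case by simp
next
  case (Cons g gs)
  have "degree (f g * f g) \<le> 2*e"
    using degree_mult_le[of "f g" "f g"] Cons.prems by auto
  moreover have "degree (sum_list (map (\<lambda>g. f g * f g) gs)) \<le> 2*e" using Cons by auto
  ultimately show ?case using degree_add_le by auto
qed

lemma lemA:
  assumes "sos_deg_C a b e ([:1,0,-1:], 0)"
  shows "\<exists>S T. goodST a b e S T"
proof -
  obtain gs where gs: "\<forall>g\<in>set gs. delta_C g \<le> e"
    "sum_list (map (\<lambda>g. fst (sq_C a b g)) gs) = [:1,0,-1:]"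
    using assms unfolding sos_deg_C_def by auto
  define S where "S = sum_list (map (\<lambda>g. fst g * fst g) gs)"
  define T where "T = sum_list (map (\<lambda>g. snd g * snd g) gs)"
  have "\<forall>g\<in>set gs. degree (fst g) \<le> e" using gs(1) unfolding delta_C_def by auto
  hence "degree S \<le> 2*e" unfolding S_def by (rule degree_sum_sq_le)
  moreover have "\<forall>x. poly S x \<ge> 0" unfolding S_def
    using poly_sum_sq_nonneg[of "map fst gs"] by (simp add: o_def)
  moreover have "\<forall>x. poly T x \<ge> 0" unfolding T_def
    using poly_sum_sq_nonneg[of "map snd gs"] by (simp add: o_def)
  moreover have "S + [:1,0,-1:] * hpoly a b * T = [:1,0,-1:]"
    using gs(2) sum_fst_sq[of a b gs] unfolding S_def T_def by simp
  ultimately show ?thesis unfolding goodST_def by blast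
qed

lemma good_T_degree:
  assumes "goodST a b e S T" "T \<noteq> 0"
  shows "degree T + 4 \<le> 2*e"
proof -
  have eq: "[:1,0,-1:] * hpoly a b * T = [:1,0,-1:] - S" using assms(1) unfolding goodST_def
    by (metis add_diff_cancel_left')
  have "degree ([:1,0,-1:] * hpoly a b * T) = 4 + degree T"
    using assms(2) by (subst degree_mult_eq, simp_all add: hpoly_def)+
  moreover have "degree ([:1,0,-1::real:] - S) \<le> max 2 (degree S)"
    using degree_diff_le_max[of "[:1,0,-1::real:]" S] by simp
  ultimately show ?thesis using eq assms(1) unfolding goodST_def by auto
qed

lemma lemB:
  assumes g: "goodST a b e S T"
  shows "sos_deg_C a b e ([:1,0,-1:], 0)"
proof -
  obtain ps where ps: "sosl ps S" using nonneg_sosl g unfolding goodST_def by blast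
  obtain qs where qs: "sosl qs T" "T = 0 \<longrightarrow> qs = []"
  proof (cases "T = 0")
    case True thus ?thesis using that[of "[]"] by (simp add: sosl_def)
  next
    case False thus ?thesis using that nonneg_sosl g unfolding goodST_def by blast
  qed
  define gs where "gs = map (\<lambda>p. (p,0::real poly)) ps @ map (\<lambda>q. (0,q)) qs"
  have "\<forall>g\<in>set gs. delta_C g \<le> e"
  proof
    fix g assume "g \<in> set gs"
    then consider p where "p \<in> set ps" "g = (p,0)" | q where "q \<in> set qs" "g = (0,q)"
      unfolding gs_def by auto
    thus "delta_C g \<le> e"
    proof cases
      case 1 thus ?thesis using ps g unfolding sosl_def goodST_def delta_C_def by auto
    next
      case 2
      show ?thesis
      proof (cases "q = 0")
        case True thus ?thesis using 2 by (simp add: delta_C_def)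
      next
        case False
        have Tnz: "T \<noteq> 0" using qs 2 by auto
        have "2 * degree q \<le> degree T" using qs 2 unfolding sosl_def by auto
        thus ?thesis using good_T_degree[OF g Tnz] 2 False by (simp add: delta_C_def)
      qed
    qed
  qed
  moreover have "sum_list (map (\<lambda>g. fst (sq_C a b g)) gs) = [:1,0,-1:]"
  proof -
    have "sum_list (map (\<lambda>g. fst g * fst g) gs) = S" using ps unfolding gs_def sosl_def
      by (simp add: o_def)
    moreover have "sum_list (map (\<lambda>g. snd g * snd g) gs) = T" using qs unfolding gs_def sosl_def
      by (simp add: o_def)
    ultimately show ?thesis using sum_fst_sq[of a b gs] g unfolding goodST_def by simp
  qed
  moreover have "sum_list (map (\<lambda>g. snd (sq_C a b g)) gs) = 0"
    unfolding gs_def by (rule sum_snd_sq_split)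
  ultimately show ?thesis unfolding sos_deg_C_def by auto
qed

lemma theta_spec:
  assumes "sos_deg_C a b e f"
  shows "sos_deg_C a b (theta_C a b f) f \<and> theta_C a b f \<le> e"
  unfolding theta_C_def using assms by (metis LeastI Least_le)

lemma sos_mono: "sos_deg_C a b e f \<Longrightarrow> e \<le> e' \<Longrightarrow> sos_deg_C a b e' f"
  unfolding sos_deg_C_def by (meson order_trans)



lemma interior_bound:
  fixes a b t :: real and k :: nat
  defines "P \<equiv> 1+a+b" and "Q \<equiv> 1-a+b"
  defines "C \<equiv> (\<bar>2+a\<bar>+1)/P" and "D \<equiv> P/Q"
  assumes p: "P > 0" and q: "Q > 0" and t: "0 \<le> t" "t \<le> 1"
    and k1: "real k \<ge> C + 1" and k2: "real k \<ge> D*(1+C)"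
  shows "((1-t)^2 + a*(1-t) + b) * (((1+(1-t))/2)^(2*k)/P + ((1-(1-t))/2)^(2*k)/Q) \<le> 1"
proof -
  define h where "h = (1-t)^2 + a*(1-t) + b"
  define u where "u = ((1+(1-t))/2)^(2*k)"
  define w where "w = ((1-(1-t))/2)^(2*k)"
  have C0: "C \<ge> 0" unfolding C_def using p by simp
  have D0: "D > 0" unfolding D_def using p q by simp
  have kpos: "k \<ge> 1" using k1 C0 by linarith
  have hh: "h = P - (2+a)*t + t^2" unfolding h_def P_def by (simp add: power2_eq_square algebra_simps)
  have "h \<le> P + (\<bar>2+a\<bar>+1)*t"
  proof -
    have "-(2+a)*t \<le> \<bar>2+a\<bar>*t" using t by (metis abs_ge_minus_self minus_mult_left mult_right_mono)
    moreover have "t^2 \<le> t" using t by (simp add: power2_eq_square mult_left_le_one_le)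
    ultimately show ?thesis using hh by (simp add: algebra_simps)
  qed
  moreover have "P*(1+C*t) = P + (\<bar>2+a\<bar>+1)*t" unfolding C_def using p by (simp add: field_simps)
  ultimately have h1: "h \<le> P*(1+C*t)" by linarith
  have u0: "u \<ge> 0" unfolding u_def using t by simp
  have v0: "w \<ge> 0" unfolding w_def using t by simp
  have ub: "u * (1 + real k * t) \<le> 1"
  proof -
    have e: "((1+(1-t))/2)*(1+t/2) = 1 - t^2/4" by (simp add: field_simps power2_eq_square)
    have "1 + real (2*k) * (t/2) \<le> (1 + t/2)^(2*k)" by (rule Bernoulli_inequality) (use t in simp)
    hence "1 + real k * t \<le> (1 + t/2)^(2*k)" by simp
    hence "u * (1 + real k * t) \<le> u * (1 + t/2)^(2*k)" using u0 by (simp add: mult_left_mono)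
    also have "\<dots> = (((1+(1-t))/2)*(1+t/2))^(2*k)" unfolding u_def by (rule power_mult_distrib[symmetric])
    also have "\<dots> = (1 - t^2/4)^(2*k)" by (simp only: e)
    also have "\<dots> \<le> 1" using t by (intro power_le_one) (auto simp: power2_eq_square intro: order.trans[OF mult_le_one])
    finally show ?thesis .
  qed
  have vb: "w \<le> t / 4^k"
  proof -
    have "w = t^(2*k) / 4^k" unfolding w_def by (simp add: power_divide power_mult)
    moreover have "t^(2*k) \<le> t"
      using t kpos by (metis One_nat_def le_add1 mult_2 mult_le_mono1 one_le_numeral order.trans power_decreasing power_one_right)
    ultimately show ?thesis by (simp add: divide_right_mono)
  qed
  define T where "T = u/P + w/Q"
  have T0: "T \<ge> 0" unfolding T_def using u0 v0 p q by simp
  have "h * T \<le> P*(1+C*t) * T" using h1 T0 by (rule mult_right_mono)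
  also have "\<dots> = (1+C*t) * u + D*(1+C*t) * w" unfolding T_def D_def using p q by (simp add: field_simps)
  also have "\<dots> \<le> 1" 
  proof -
    have kt: "1 + real k * t > 0" using t by (metis add_pos_nonneg mult_nonneg_nonneg of_nat_0_le_iff zero_less_one)
    have A1: "(1+C*t)*(1+real k*t) \<le> (1+C)*(1+real k)"
      using t C0 by (intro mult_mono) (auto simp: mult_left_le)
    have A2: "D*((1+C)*(1+real k)) \<le> real k * (1+real k)"
      using k2 by (simp add: mult.assoc[symmetric] mult_right_mono)
    have "k * (k+1) \<le> 4^k"
    proof -
      have "k < 2^k" by (rule less_exp)
      hence "k*(k+1) \<le> 2^k * 2^k" by (intro mult_mono) (auto simp: Suc_le_eq)
      thus ?thesis by (simp add: power_mult_distrib[symmetric])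
    qed
    hence A3: "real k * (1+real k) \<le> 4^k" by (metis add.commute of_nat_1 of_nat_add of_nat_le_iff of_nat_mult of_nat_numeral of_nat_power)
    have A4: "D*(1+C*t)*(1+real k*t) \<le> 4^k"
      using A1 A2 A3 D0 by (smt (verit) mult.assoc mult_left_mono)
    have B1: "D*(1+C*t)* w \<le> t / (1+real k*t)"
    proof -
      have 1: "D*(1+C*t)* w \<le> D*(1+C*t)*(t/4^k)" using vb D0 C0 t by (intro mult_left_mono) auto
      have "D*(1+C*t)*(t/4^k) * (1+real k*t) = (D*(1+C*t)*(1+real k*t)) * t / 4^k" by (simp add: field_simps)
      also have "\<dots> \<le> 4^k * t / 4^k" using A4 t by (intro divide_right_mono mult_right_mono) auto
      also have "\<dots> = t" by simp
      finally have "D*(1+C*t)*(t/4^k) \<le> t / (1+real k*t)" using kt by (simp add: pos_le_divide_eq)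
      thus ?thesis using 1 by linarith
    qed
    have B2: "(1+C*t)*u \<le> (1+C*t) / (1+real k*t)"
    proof -
      have "u \<le> 1/(1+real k*t)" using ub kt by (simp add: pos_le_divide_eq mult.commute)
      hence "(1+C*t)*u \<le> (1+C*t)*(1/(1+real k*t))" using C0 t by (intro mult_left_mono) auto
      thus ?thesis by simp
    qed
    have "(1+C*t)*u + D*(1+C*t)* w \<le> (1+C*t+t)/(1+real k*t)" using B1 B2 by (simp add: add_divide_distrib)
    also have "\<dots> \<le> 1"
    proof -
      have "t*(C+1) \<le> t*real k" using k1 t by (intro mult_left_mono) auto
      hence "t + C*t \<le> t*real k" by (simp add: algebra_simps)
      thus ?thesis using kt by (simp add: field_simps)
    qed
    finally show ?thesis .
  qed
  finally show ?thesis unfolding h_def u_def w_def T_def .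
qed

lemma exterior_bound:
  fixes a b x :: real and k :: nat
  defines "P \<equiv> 1+a+b" and "Q \<equiv> 1-a+b"
  assumes p: "P > 0" and q: "Q > 0" and x: "x \<ge> 1" and hx: "x^2 + a*x + b > 0"
    and k1: "a < -2 \<Longrightarrow> real k * (b - a^2/4) \<ge> -(2+a)"
  shows "(x^2 + a*x + b) * (((1+x)/2)^(2*k)/P + ((1-x)/2)^(2*k)/Q) \<ge> 1"
proof -
  define t where "t = x - 1"
  define h where "h = x^2 + a*x + b"
  have t0: "t \<ge> 0" using x t_def by simp
  have "1 + real (2*k) * (t/2) \<le> (1 + t/2)^(2*k)" by (rule Bernoulli_inequality) (use t0 in simp)
  hence b: "1 + real k * t \<le> (1 + t/2)^(2*k)" by simp
  have e: "(1+x)/2 = 1 + t/2" unfolding t_def by (simp add: field_simps)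
  have ub: "1 + real k * t \<le> ((1+x)/2)^(2*k)" using b by (simp only: e)
  have w0: "((1-x)/2)^(2*k)/Q \<ge> 0" using q by simp
  have hh: "h = P + (2+a)*t + t^2" unfolding h_def P_def t_def by (simp add: power2_eq_square algebra_simps)
  have key: "(2+a) + t + real k * h \<ge> 0"
  proof (cases "a < -2")
    case False
    thus ?thesis using t0 hx unfolding h_def by simp
  next
    case True
    have "h = (x + a/2)^2 + (b - a^2/4)" unfolding h_def by (simp add: power2_eq_square algebra_simps)
    hence "h \<ge> b - a^2/4" by simp
    hence "real k * h \<ge> real k * (b - a^2/4)" by (simp add: mult_left_mono)
    thus ?thesis using k1[OF True] t0 by linarith
  qed
  have "h * (1 + real k * t) - P = t * ((2+a) + t + real k * h)" using hh by (simp add: algebra_simps power2_eq_square)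
  also have "\<dots> \<ge> 0" using t0 key by simp
  finally have 1: "h * (1 + real k * t) \<ge> P" by simp
  have "h * (1 + real k * t) \<le> h * ((1+x)/2)^(2*k)" using ub hx unfolding h_def by (simp add: mult_left_mono)
  hence "P \<le> h * ((1+x)/2)^(2*k)" using 1 by linarith
  hence "1 \<le> h * (((1+x)/2)^(2*k)/P)" using p by (simp add: field_simps)
  also have "\<dots> \<le> h * (((1+x)/2)^(2*k)/P + ((1-x)/2)^(2*k)/Q)" using w0 hx unfolding h_def by (intro mult_left_mono) auto
  finally show ?thesis unfolding h_def .
qed

lemma hT_bounds:
  assumes "(a, b) \<in> P_set"
  shows "\<exists>k. \<forall>x::real. (\<bar>x\<bar> \<le> 1 \<longrightarrow> (x^2+a*x+b)*(((1+x)/2)^(2*k)/(1+a+b) + ((1-x)/2)^(2*k)/(1-a+b)) \<le> 1)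
     \<and> (\<bar>x\<bar> \<ge> 1 \<longrightarrow> (x^2+a*x+b)*(((1+x)/2)^(2*k)/(1+a+b) + ((1-x)/2)^(2*k)/(1-a+b)) \<ge> 1)"
proof -
  have pos: "\<And>x. \<bar>x\<bar> \<ge> 1 \<Longrightarrow> x^2 + a*x + b > 0" using assms unfolding P_set_def by auto
  define P where "P = 1+a+b"
  define Q where "Q = 1-a+b"
  have p: "P > 0" using pos[of 1] unfolding P_def by simp
  have q: "Q > 0" using pos[of "-1"] unfolding Q_def by simp
  define m where "m = b - a^2/4"
  have m1: "a < -2 \<Longrightarrow> m > 0" using pos[of "-a/2"] unfolding m_def by (simp add: power2_eq_square field_simps)
  have m2: "a > 2 \<Longrightarrow> m > 0" using pos[of "-a/2"] unfolding m_def by (simp add: power2_eq_square field_simps)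
  define C where "C = (\<bar>2+a\<bar>+1)/P"
  define D where "D = P/Q"
  define C' where "C' = (\<bar>2+(-a)\<bar>+1)/Q"
  define D' where "D' = Q/P"
  define E where "E = (if m > 0 then \<bar>2+a\<bar>/m + \<bar>2-a\<bar>/m else 0)"
  obtain k :: nat where k: "real k \<ge> max (max (C+1) (D*(1+C))) (max (max (C'+1) (D'*(1+C'))) E)"
    by (meson real_arch_simple)
  have k1: "real k \<ge> C + 1" "real k \<ge> D*(1+C)" "real k \<ge> C' + 1" "real k \<ge> D'*(1+C')" "real k \<ge> E"
    using k by auto
  have E1: "a < -2 \<Longrightarrow> real k * (b - a^2/4) \<ge> -(2+a)"
  proof -
    assume a: "a < -2"
    have "real k \<ge> \<bar>2+a\<bar>/m" using k1(5) m1[OF a] unfolding E_def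
      by (smt (verit) divide_nonneg_pos abs_ge_zero)
    hence "real k * m \<ge> \<bar>2+a\<bar>" using m1[OF a] by (simp add: pos_divide_le_eq)
    thus ?thesis unfolding m_def by linarith
  qed
  have E2: "-a < -2 \<Longrightarrow> real k * (b - (-a)^2/4) \<ge> -(2+(-a))"
  proof -
    assume a: "-a < -2"
    hence a': "a > 2" by simp
    have "real k \<ge> \<bar>2-a\<bar>/m" using k1(5) m2[OF a'] unfolding E_def
      by (smt (verit) divide_nonneg_pos abs_ge_zero)
    hence "real k * m \<ge> \<bar>2-a\<bar>" using m2[OF a'] by (simp add: pos_divide_le_eq)
    thus ?thesis unfolding m_def by simp
  qed
  have "\<forall>x::real. (\<bar>x\<bar> \<le> 1 \<longrightarrow> (x^2+a*x+b)*(((1+x)/2)^(2*k)/(1+a+b) + ((1-x)/2)^(2*k)/(1-a+b)) \<le> 1)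
     \<and> (\<bar>x\<bar> \<ge> 1 \<longrightarrow> (x^2+a*x+b)*(((1+x)/2)^(2*k)/(1+a+b) + ((1-x)/2)^(2*k)/(1-a+b)) \<ge> 1)"
  proof (intro allI conjI impI)
    fix x :: real
    assume x: "\<bar>x\<bar> \<le> 1"
    show "(x^2+a*x+b)*(((1+x)/2)^(2*k)/(1+a+b) + ((1-x)/2)^(2*k)/(1-a+b)) \<le> 1"
    proof (cases "x \<ge> 0")
      case True
      have "((1-(1-x))^2 + a*(1-(1-x)) + b) * (((1+(1-(1-x)))/2)^(2*k)/(1+a+b) + ((1-(1-(1-x)))/2)^(2*k)/(1-a+b)) \<le> 1"
        by (rule interior_bound) (use p q x True k1 in \<open>auto simp: P_def Q_def C_def D_def\<close>)
      thus ?thesis by simp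
    next
      case False
      have "((1-(1+x))^2 + (-a)*(1-(1+x)) + b) * (((1+(1-(1+x)))/2)^(2*k)/(1+(-a)+b) + ((1-(1-(1+x)))/2)^(2*k)/(1-(-a)+b)) \<le> 1"
        by (rule interior_bound) (use p q x False k1 in \<open>auto simp: P_def Q_def C'_def D'_def\<close>)
      thus ?thesis by (simp add: add.commute power2_eq_square)
    qed
  next
    fix x :: real
    assume x: "\<bar>x\<bar> \<ge> 1"
    show "(x^2+a*x+b)*(((1+x)/2)^(2*k)/(1+a+b) + ((1-x)/2)^(2*k)/(1-a+b)) \<ge> 1"
    proof (cases "x \<ge> 0")
      case True
      show ?thesis
        by (rule exterior_bound) (use p q x True E1 pos[OF x] in \<open>auto simp: P_def Q_def\<close>)
    next
      case False
      have "((-x)^2 + (-a)*(-x) + b) * (((1+(-x))/2)^(2*k)/(1+(-a)+b) + ((1-(-x))/2)^(2*k)/(1-(-a)+b)) \<ge> 1"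
        by (rule exterior_bound) (use p q x False E2 pos[OF x] in \<open>auto simp: P_def Q_def\<close>)
      thus ?thesis by (simp add: add.commute)
    qed
  qed
  thus ?thesis by blast
qed

lemma existence:
  assumes "(a, b) \<in> P_set"
  shows "\<exists>S T. goodST a b (degree S) S T"
proof -
  obtain k where k: "\<forall>x::real. (\<bar>x\<bar> \<le> 1 \<longrightarrow> (x^2+a*x+b)*(((1+x)/2)^(2*k)/(1+a+b) + ((1-x)/2)^(2*k)/(1-a+b)) \<le> 1)
     \<and> (\<bar>x\<bar> \<ge> 1 \<longrightarrow> (x^2+a*x+b)*(((1+x)/2)^(2*k)/(1+a+b) + ((1-x)/2)^(2*k)/(1-a+b)) \<ge> 1)"
    using hT_bounds[OF assms] by blast
  define T where "T = smult (1/(1+a+b)) ([:1/2,1/2:]^(2*k)) + smult (1/(1-a+b)) ([:1/2,-1/2:]^(2*k))"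
  define S where "S = [:1,0,-1:] * (1 - hpoly a b * T)"
  have pos: "\<And>x. \<bar>x\<bar> \<ge> 1 \<Longrightarrow> x^2 + a*x + b > 0" using assms unfolding P_set_def by auto
  have p: "1+a+b > 0" using pos[of 1] by simp
  have q: "1-a+b > 0" using pos[of "-1"] by simp
  have pT: "poly T x = ((1+x)/2)^(2*k)/(1+a+b) + ((1-x)/2)^(2*k)/(1-a+b)" for x
    unfolding T_def by (simp add: poly_power field_simps)
  have ph: "poly (hpoly a b) x = x^2+a*x+b" for x unfolding hpoly_def by (simp add: power2_eq_square algebra_simps)
  have T0: "\<forall>x. poly T x \<ge> 0"
  proof
    fix x :: real
    have "((1+x)/2)^(2*k) \<ge> 0" "((1-x)/2)^(2*k) \<ge> 0" by (simp_all add: power_mult)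
    thus "poly T x \<ge> 0" using p q pT by simp
  qed
  have S0: "\<forall>x. poly S x \<ge> 0"
  proof
    fix x :: real
    have e: "poly S x = (1 - x^2) * (1 - (x^2+a*x+b) * poly T x)" unfolding S_def
      by (simp add: ph power2_eq_square algebra_simps)
    show "poly S x \<ge> 0"
    proof (cases "\<bar>x\<bar> \<le> 1")
      case True
      hence "x^2 \<le> 1" by (simp add: abs_square_le_1)
      thus ?thesis using k True unfolding e pT by simp
    next
      case False
      hence "x^2 \<ge> 1" using abs_square_le_1[of x] by simp
      thus ?thesis using k False unfolding e pT by (intro mult_nonpos_nonpos) auto
    qed
  qed
  have "S + [:1,0,-1:] * hpoly a b * T = [:1,0,-1:]" unfolding S_def by (simp add: algebra_simps one_pCons)
  hence "goodST a b (degree S) S T" using S0 T0 unfolding goodST_def by simp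
  thus ?thesis by blast
qed

lemma N_spec:
  assumes "(a, b) \<in> P_set"
  shows "sos_deg_C a b (N_ab a b) ([:1,0,-1:], 0)"
proof -
  obtain S T where "goodST a b (degree S) S T" using existence[OF assms] by blast
  hence "sos_deg_C a b (degree S) ([:1,0,-1:], 0)" by (rule lemB)
  thus ?thesis unfolding N_ab_def using theta_spec by blast
qed

lemma N_le:
  assumes "sos_deg_C a b e ([:1,0,-1:], 0)"
  shows "N_ab a b \<le> e"
  unfolding N_ab_def using theta_spec[OF assms] by blast



definition lag :: "real set \<Rightarrow> real \<Rightarrow> real poly" where
  "lag X j = smult (1 / (\<Prod>k\<in>X-{j}. (j - k))) (\<Prod>k\<in>X-{j}. [:-k,1:])"

lemma poly_lag_self: "finite X \<Longrightarrow> poly (lag X j) j = 1"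
proof -
  assume X: "finite X"
  have "(\<Prod>k\<in>X-{j}. (j - k)) \<noteq> 0" using X by (simp add: prod_zero_iff)
  thus ?thesis unfolding lag_def by (simp add: poly_prod)
qed

lemma poly_lag_other: "finite X \<Longrightarrow> i \<in> X \<Longrightarrow> i \<noteq> j \<Longrightarrow> poly (lag X j) i = 0"
  unfolding lag_def using prod_zero_iff by (auto simp: poly_prod)

lemma degree_lag: "finite X \<Longrightarrow> j \<in> X \<Longrightarrow> degree (lag X j) \<le> card X - 1"
proof -
  assume X: "finite X" "j \<in> X"
  have "degree (\<Prod>k\<in>X-{j}. [:-k,1::real:]) \<le> (\<Sum>k\<in>X-{j}. degree [:-k,1::real:])"
    using degree_prod_sum_le[of "X-{j}" "\<lambda>k. [:-k,1::real:]"] X by (simp add: o_def)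
  also have "\<dots> = card (X - {j})" by simp
  also have "\<dots> = card X - 1" using X by simp
  finally show ?thesis unfolding lag_def by simp
qed

lemma interp:
  fixes p :: "real poly"
  assumes X: "finite X" and dg: "degree p < card X"
  shows "p = (\<Sum>j\<in>X. smult (poly p j) (lag X j))"
proof -
  define q where "q = p - (\<Sum>j\<in>X. smult (poly p j) (lag X j))"
  have pq: "poly q i = 0" if "i \<in> X" for i
  proof -
    have "(\<Sum>j\<in>X. poly p j * poly (lag X j) i) = (\<Sum>j\<in>{i}. poly p j * poly (lag X j) i)"
      by (rule sum.mono_neutral_right) (use X that poly_lag_other in auto)
    thus ?thesis unfolding q_def using X by (simp add: poly_sum poly_lag_self)
  qed
  have "degree (\<Sum>j\<in>X. smult (poly p j) (lag X j)) \<le> card X - 1"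
    by (rule degree_sum_le) (use X degree_lag in \<open>auto intro: order.trans[OF degree_smult_le]\<close>)
  moreover have "degree q \<le> max (degree p) (degree (\<Sum>j\<in>X. smult (poly p j) (lag X j)))"
    unfolding q_def by (rule degree_diff_le_max)
  ultimately have dq: "degree q < card X" using dg by linarith
  have "q = 0"
  proof (rule ccontr)
    assume "q \<noteq> 0"
    hence "card {x. poly q x = 0} \<le> degree q" by (rule card_poly_roots_bound)
    moreover have "card X \<le> card {x. poly q x = 0}"
      using poly_roots_finite[OF \<open>q \<noteq> 0\<close>] pq by (intro card_mono) auto
    ultimately show False using dq by simp
  qed
  thus ?thesis unfolding q_def by simp
qed

lemma interp_poly:
  fixes p :: "real poly"
  assumes "finite X" "degree p < card X"
  shows "poly p x = (\<Sum>j\<in>X. poly p j * poly (lag X j) x)"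
  by (subst interp[OF assms]) (simp add: poly_sum)

lemma finite_subseq:
  fixes f :: "nat \<Rightarrow> real \<Rightarrow> real"
  assumes "finite X" "\<forall>j\<in>X. \<forall>n. \<bar>f n j\<bar> \<le> B"
  shows "\<exists>r. strict_mono r \<and> (\<forall>j\<in>X. \<exists>l. (\<lambda>n. f (r n) j) \<longlonglongrightarrow> l)"
  using assms
proof (induction X rule: finite_induct)
  case empty
  show ?case by (rule exI[of _ id]) (simp add: strict_mono_def)
next
  case (insert i X)
  then obtain r where r: "strict_mono r" "\<forall>j\<in>X. \<exists>l. (\<lambda>n. f (r n) j) \<longlonglongrightarrow> l" by auto
  have "bounded (range (\<lambda>n. f (r n) i))"
    using insert.prems by (intro boundedI[of _ B]) auto
  then obtain l r' where r': "strict_mono r'" "((\<lambda>n. f (r n) i) \<circ> r') \<longlonglongrightarrow> l"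
    using bounded_imp_convergent_subsequence by blast
  have "strict_mono (r \<circ> r')" using r(1) r'(1) by (rule strict_mono_o)
  moreover have "\<forall>j\<in>insert i X. \<exists>l. (\<lambda>n. f ((r \<circ> r') n) j) \<longlonglongrightarrow> l"
  proof
    fix j assume "j \<in> insert i X"
    then consider "j = i" | "j \<in> X" by auto
    thus "\<exists>l. (\<lambda>n. f ((r \<circ> r') n) j) \<longlonglongrightarrow> l"
    proof cases
      case 1 thus ?thesis using r'(2) by (auto simp: o_def)
    next
      case 2
      then obtain l where "(\<lambda>n. f (r n) j) \<longlonglongrightarrow> l" using r(2) by auto
      hence "(\<lambda>n. f (r (r' n)) j) \<longlonglongrightarrow> l" using LIMSEQ_subseq_LIMSEQ[OF _ r'(1)] by (auto simp: o_def)
      thus ?thesis by (auto simp: o_def)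
    qed
  qed
  ultimately show ?case by blast
qed

lemma nodes:
  fixes g :: "real poly"
  assumes "\<bar>x1\<bar> < 1" "poly g x1 > 0"
  shows "\<exists>X. finite X \<and> card X = Suc n \<and> (\<forall>x\<in>X. \<bar>x\<bar> < 1 \<and> poly g x > 0)"
proof -
  obtain d where d: "d > 0" "\<forall>y. \<bar>y - x1\<bar> < d \<longrightarrow> poly g y > 0" using sign_near[OF assms(2)] by blast
  define d' where "d' = min d (1 - \<bar>x1\<bar>)"
  have d'0: "d' > 0" unfolding d'_def using d assms by simp
  define f where "f = (\<lambda>j::nat. x1 + d' * real j / (real n + 2))"
  define X where "X = f ` {0..n}"
  have "inj_on f {0..n}" unfolding f_def inj_on_def using d'0 by (auto simp: field_simps)
  hence "card X = Suc n" unfolding X_def by (simp add: card_image)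
  moreover have "\<bar>x\<bar> < 1 \<and> poly g x > 0" if xX: "x \<in> X" for x
  proof -
    obtain j where j0: "j \<in> {0..n}" "x = f j" using xX unfolding X_def by blast
    hence j: "j \<le> n" "x = f j" by auto
    have "real j / (real n + 2) < 1" using j by (simp add: field_simps)
    moreover have "real j / (real n + 2) \<ge> 0" by simp
    ultimately have "d' * (real j / (real n + 2)) < d' * 1" "d' * (real j / (real n + 2)) \<ge> 0"
      using d'0 by (intro mult_strict_left_mono mult_nonneg_nonneg, auto)+
    hence "\<bar>x - x1\<bar> < d'" using j unfolding f_def by simp
    thus ?thesis using d unfolding d'_def by (smt (verit))
  qed
  ultimately show ?thesis unfolding X_def by auto
qed

lemma good_pointwise:
  assumes "goodST a b e S T"
  shows "poly S x = (1-x^2)*(1 - (x^2+a*x+b)*poly T x)"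
proof -
  have "poly (S + [:1,0,-1:] * hpoly a b * T) x = poly [:1,0,-1:] x"
    using assms unfolding goodST_def by simp
  thus ?thesis by (simp add: hpoly_def algebra_simps power2_eq_square)
qed

lemma good_inside:
  assumes "goodST a b e S T" "\<bar>x\<bar> < 1"
  shows "(x^2+a*x+b)*poly T x \<le> 1"
proof -
  have "x^2 < 1" using assms(2) by (simp add: abs_square_less_1)
  moreover have "0 \<le> (1-x^2)*(1 - (x^2+a*x+b)*poly T x)"
  proof -
    have "0 \<le> poly S x" using assms(1) unfolding goodST_def by blast
    thus ?thesis by (simp only: good_pointwise[OF assms(1)])
  qed
  ultimately show ?thesis by (simp add: zero_le_mult_iff)
qed

lemma good_outside:
  assumes "goodST a b e S T" "\<bar>x\<bar> > 1"
  shows "(x^2+a*x+b)*poly T x \<ge> 1"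
proof -
  have "\<not> x^2 \<le> 1" using assms(2) by (simp add: abs_square_le_1)
  hence "x^2 > 1" by simp
  moreover have "0 \<le> (1-x^2)*(1 - (x^2+a*x+b)*poly T x)"
  proof -
    have "0 \<le> poly S x" using assms(1) unfolding goodST_def by blast
    thus ?thesis by (simp only: good_pointwise[OF assms(1)])
  qed
  ultimately show ?thesis by (simp add: zero_le_mult_iff)
qed

lemma good_degT: "goodST a b e S T \<Longrightarrow> degree T \<le> 2*e"
  using good_T_degree[of a b e S T] by (cases "T = 0") auto

lemma good_degS: "goodST a b e S T \<Longrightarrow> degree S \<le> 2*e"
  unfolding goodST_def by auto

lemma eventual_bound:
  fixes A B :: "nat \<Rightarrow> real"
  assumes good: "\<forall>\<nu>. goodST (A \<nu>) (B \<nu>) M (SS \<nu>) (TT \<nu>)"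
    and cA: "A \<longlonglongrightarrow> a" and cB: "B \<longlonglongrightarrow> b"
    and X: "finite X" "X \<noteq> {}" "\<forall>x\<in>X. \<bar>x\<bar> < 1 \<and> x^2+a*x+b > 0"
  shows "\<exists>c>0. eventually (\<lambda>\<nu>. \<forall>j\<in>X. \<bar>poly (TT \<nu>) j\<bar> \<le> 1/c) sequentially"
proof -
  define c where "c = Min ((\<lambda>x. x^2+a*x+b) ` X) / 2"
  have "Min ((\<lambda>x. x^2+a*x+b) ` X) > 0" using X by (subst Min_gr_iff) auto
  hence c0: "c > 0" unfolding c_def by simp
  have cj: "c < j^2+a*j+b" if "j \<in> X" for j
  proof -
    have "Min ((\<lambda>x. x^2+a*x+b) ` X) \<le> j^2+a*j+b" using X that by (intro Min_le) auto
    thus ?thesis using c0 unfolding c_def by linarith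
  qed
  have "eventually (\<lambda>\<nu>. \<forall>j\<in>X. c < j^2 + A \<nu> * j + B \<nu>) sequentially"
  proof (rule eventually_ball_finite[OF X(1)], rule ballI)
    fix j assume "j \<in> X"
    have "(\<lambda>\<nu>. j^2 + A \<nu> * j + B \<nu>) \<longlonglongrightarrow> j^2 + a*j + b" using cA cB by (intro tendsto_intros)
    thus "eventually (\<lambda>\<nu>. c < j^2 + A \<nu> * j + B \<nu>) sequentially" using cj[OF \<open>j \<in> X\<close>] by (rule order_tendstoD)
  qed
  hence "eventually (\<lambda>\<nu>. \<forall>j\<in>X. \<bar>poly (TT \<nu>) j\<bar> \<le> 1/c) sequentially"
  proof (rule eventually_mono, intro ballI)
    fix \<nu> j assume H: "\<forall>j\<in>X. c < j^2 + A \<nu> * j + B \<nu>" and j: "j \<in> X"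
    have T0: "poly (TT \<nu>) j \<ge> 0" using good unfolding goodST_def by auto
    have "(j^2 + A \<nu> * j + B \<nu>) * poly (TT \<nu>) j \<le> 1" using good_inside[of "A \<nu>" "B \<nu>" M "SS \<nu>" "TT \<nu>" j] good X j by auto
    moreover have "c * poly (TT \<nu>) j \<le> (j^2 + A \<nu> * j + B \<nu>) * poly (TT \<nu>) j"
      using H j T0 by (intro mult_right_mono) auto
    ultimately have "c * poly (TT \<nu>) j \<le> 1" by linarith
    hence "poly (TT \<nu>) j \<le> 1/c" using c0 by (simp add: pos_le_divide_eq mult.commute)
    thus "\<bar>poly (TT \<nu>) j\<bar> \<le> 1/c" using T0 by simp
  qed
  thus ?thesis using c0 by blast
qed

lemma interp_bound:
  fixes p :: "real poly"
  assumes "finite X" "degree p < card X" "\<forall>j\<in>X. \<bar>poly p j\<bar> \<le> K"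
  shows "\<bar>poly p x\<bar> \<le> K * (\<Sum>j\<in>X. \<bar>poly (lag X j) x\<bar>)"
proof -
  have "\<bar>poly p x\<bar> = \<bar>\<Sum>j\<in>X. poly p j * poly (lag X j) x\<bar>" by (rule arg_cong[OF interp_poly[OF assms(1,2)]])
  also have "\<dots> \<le> (\<Sum>j\<in>X. \<bar>poly p j * poly (lag X j) x\<bar>)" by (rule sum_abs)
  also have "\<dots> \<le> (\<Sum>j\<in>X. K * \<bar>poly (lag X j) x\<bar>)"
  proof (rule sum_mono)
    fix j assume "j \<in> X"
    hence "\<bar>poly p j\<bar> \<le> K" using assms(3) by blast
    hence "\<bar>poly p j\<bar> * \<bar>poly (lag X j) x\<bar> \<le> K * \<bar>poly (lag X j) x\<bar>" by (rule mult_right_mono) simp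
    thus "\<bar>poly p j * poly (lag X j) x\<bar> \<le> K * \<bar>poly (lag X j) x\<bar>" by (simp only: abs_mult)
  qed
  also have "\<dots> = K * (\<Sum>j\<in>X. \<bar>poly (lag X j) x\<bar>)" by (simp add: sum_distrib_left)
  finally show ?thesis .
qed

lemma poly_hpoly: "poly (hpoly a b) x = x^2 + a*x + b"
  unfolding hpoly_def by (simp add: power2_eq_square algebra_simps)

lemma part1:
  fixes A B :: "nat \<Rightarrow> real"
  assumes good: "\<forall>\<nu>. goodST (A \<nu>) (B \<nu>) M (SS \<nu>) (TT \<nu>)"
    and cA: "A \<longlonglongrightarrow> a" and cB: "B \<longlonglongrightarrow> b"
    and posn: "\<forall>\<nu> x. \<bar>x\<bar> \<ge> 1 \<longrightarrow> x^2 + A \<nu> * x + B \<nu> > 0"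
    and x0: "\<bar>x0\<bar> \<ge> 1" "x0^2 + a*x0 + b = 0"
    and x1: "\<bar>x1\<bar> < 1" "x1^2 + a*x1 + b > 0"
  shows False
proof -
  obtain X where X: "finite X" "card X = Suc (2*M)" "\<forall>x\<in>X. \<bar>x\<bar> < 1 \<and> poly (hpoly a b) x > 0"
    using nodes[of x1 "hpoly a b" "2*M"] x1 by (auto simp: poly_hpoly)
  have Xne: "X \<noteq> {}" using X(2) by auto
  obtain c where c: "c > 0" "eventually (\<lambda>\<nu>. \<forall>j\<in>X. \<bar>poly (TT \<nu>) j\<bar> \<le> 1/c) sequentially"
    using eventual_bound[OF good cA cB X(1) Xne] X(3) by (auto simp: poly_hpoly)
  define L where "L z = (\<Sum>j\<in>X. \<bar>poly (lag X j) z\<bar>)" for z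
  have bnd: "eventually (\<lambda>\<nu>. \<forall>z. \<bar>poly (TT \<nu>) z\<bar> \<le> (1/c) * L z) sequentially"
    using c(2)
  proof (rule eventually_mono, intro allI)
    fix \<nu> z assume H: "\<forall>j\<in>X. \<bar>poly (TT \<nu>) j\<bar> \<le> 1/c"
    have "degree (TT \<nu>) < card X" using good_degT[of "A \<nu>" "B \<nu>" M "SS \<nu>" "TT \<nu>"] good X(2) by auto
    thus "\<bar>poly (TT \<nu>) z\<bar> \<le> (1/c) * L z" unfolding L_def using interp_bound[OF X(1) _ H] by blast
  qed
  have low: "c \<le> (z^2+a*z+b) * L z" if z: "\<bar>z\<bar> > 1" for z
  proof -
    have ev: "eventually (\<lambda>\<nu>. 1 \<le> (z^2 + A \<nu> * z + B \<nu>) * (L z / c)) sequentially"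
      using bnd
    proof (rule eventually_mono)
      fix \<nu> assume H: "\<forall>z. \<bar>poly (TT \<nu>) z\<bar> \<le> (1/c) * L z"
      have hp: "z^2 + A \<nu> * z + B \<nu> > 0" using posn z by auto
      have "1 \<le> (z^2 + A \<nu> * z + B \<nu>) * poly (TT \<nu>) z" using good_outside[of "A \<nu>" "B \<nu>" M "SS \<nu>" "TT \<nu>" z] good z by auto
      also have "\<dots> \<le> (z^2 + A \<nu> * z + B \<nu>) * ((1/c) * L z)"
        using H hp by (intro mult_left_mono) (auto simp: abs_le_iff)
      finally show "1 \<le> (z^2 + A \<nu> * z + B \<nu>) * (L z / c)" by simp
    qed
    have "(\<lambda>\<nu>. (z^2 + A \<nu> * z + B \<nu>) * (L z / c)) \<longlonglongrightarrow> (z^2 + a * z + b) * (L z / c)"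
      using cA cB by (intro tendsto_intros)
    hence "1 \<le> (z^2 + a * z + b) * (L z / c)" using ev by (rule tendsto_lowerbound) simp
    thus ?thesis using c(1) by (simp add: field_simps)
  qed
  define g where "g z = (z^2+a*z+b) * L z" for z
  have "continuous (at x0) g" unfolding g_def L_def by (intro continuous_intros)
  moreover have gx0: "g x0 = 0" unfolding g_def using x0 by simp
  ultimately obtain d where d: "d > 0" "\<forall>y. dist y x0 < d \<longrightarrow> dist (g y) (g x0) < c"
    using c(1) unfolding continuous_at_eps_delta by blast
  define z where "z = (if x0 > 0 then x0 + d/2 else x0 - d/2)"
  have "\<bar>z\<bar> > 1" "dist z x0 < d" unfolding z_def using x0(1) d(1) by (auto simp: dist_real_def)
  hence "c \<le> g z" "\<bar>g z\<bar> < c" using low d(2) gx0 unfolding g_def by (auto simp: dist_real_def)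
  thus False by simp
qed

lemma part2:
  fixes A B :: "nat \<Rightarrow> real"
  assumes good: "\<forall>\<nu>. goodST (A \<nu>) (B \<nu>) M (SS \<nu>) (TT \<nu>)"
    and cA: "A \<longlonglongrightarrow> a" and cB: "B \<longlonglongrightarrow> b"
    and inP: "(a, b) \<in> P_set"
  shows "\<exists>S T. goodST a b M S T"
proof -
  have "\<forall>x. \<bar>x\<bar> \<ge> 1 \<longrightarrow> x^2 + a*x + b > 0" using inP unfolding P_set_def by auto
  hence "poly (hpoly a b) 1 > 0" by (auto simp: poly_hpoly dest: spec[of _ 1])
  then obtain d where d: "d > 0" "\<forall>y. \<bar>y - 1\<bar> < d \<longrightarrow> poly (hpoly a b) y > 0" using sign_near by blast
  define x1 where "x1 = 1 - min d 1 / 2"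
  have x1: "\<bar>x1\<bar> < 1" "poly (hpoly a b) x1 > 0" unfolding x1_def using d by auto
  obtain X where X: "finite X" "card X = Suc (2*M)" "\<forall>x\<in>X. \<bar>x\<bar> < 1 \<and> poly (hpoly a b) x > 0"
    using nodes[OF x1, of "2*M"] by auto
  have Xne: "X \<noteq> {}" using X(2) by auto
  obtain c where c: "c > 0" "eventually (\<lambda>\<nu>. \<forall>j\<in>X. \<bar>poly (TT \<nu>) j\<bar> \<le> 1/c) sequentially"
    using eventual_bound[OF good cA cB X(1) Xne] X(3) by (auto simp: poly_hpoly)
  obtain N0 where N0: "\<forall>\<nu>\<ge>N0. \<forall>j\<in>X. \<bar>poly (TT \<nu>) j\<bar> \<le> 1/c" using c(2) unfolding eventually_sequentially by blast
  define f where "f n j = poly (TT (n + N0)) j" for n j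
  have "\<forall>j\<in>X. \<forall>n. \<bar>f n j\<bar> \<le> 1/c" unfolding f_def using N0 by auto
  then obtain r where r: "strict_mono r" "\<forall>j\<in>X. \<exists>l. (\<lambda>n. f (r n) j) \<longlonglongrightarrow> l"
    using finite_subseq[OF X(1)] by blast
  define rr where "rr n = r n + N0" for n
  have rr: "strict_mono rr" using r(1) unfolding rr_def strict_mono_def by auto
  define \<tau> where "\<tau> j = lim (\<lambda>n. f (r n) j)" for j
  have tau: "(\<lambda>n. poly (TT (rr n)) j) \<longlonglongrightarrow> \<tau> j" if "j \<in> X" for j
  proof -
    have "convergent (\<lambda>n. f (r n) j)" using r(2) that unfolding convergent_def by blast
    hence "(\<lambda>n. f (r n) j) \<longlonglongrightarrow> \<tau> j" unfolding \<tau>_def by (simp add: convergent_LIMSEQ_iff)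
    thus ?thesis unfolding f_def rr_def by simp
  qed
  have cA': "(\<lambda>n. A (rr n)) \<longlonglongrightarrow> a" using LIMSEQ_subseq_LIMSEQ[OF cA rr] by (simp add: o_def)
  have cB': "(\<lambda>n. B (rr n)) \<longlonglongrightarrow> b" using LIMSEQ_subseq_LIMSEQ[OF cB rr] by (simp add: o_def)
  have good': "goodST (A (rr n)) (B (rr n)) M (SS (rr n)) (TT (rr n))" for n using good by blast
  have degT: "degree (TT (rr n)) < card X" for n using good_degT[OF good'[of n]] X(2) by simp
  have degS: "degree (SS (rr n)) < card X" for n using good_degS[OF good'[of n]] X(2) by simp
  define T where "T = (\<Sum>j\<in>X. smult (\<tau> j) (lag X j))"
  have Tconv: "(\<lambda>n. poly (TT (rr n)) x) \<longlonglongrightarrow> poly T x" for x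
  proof -
    have e: "(\<lambda>n. poly (TT (rr n)) x) = (\<lambda>n. \<Sum>j\<in>X. poly (TT (rr n)) j * poly (lag X j) x)"
      by (rule ext, rule interp_poly[OF X(1) degT])
    have "(\<lambda>n. \<Sum>j\<in>X. poly (TT (rr n)) j * poly (lag X j) x) \<longlonglongrightarrow> (\<Sum>j\<in>X. \<tau> j * poly (lag X j) x)"
      using tau by (intro tendsto_sum tendsto_mult_right) auto
    thus ?thesis unfolding e T_def by (simp add: poly_sum)
  qed
  define \<sigma> where "\<sigma> j = (1-j^2)*(1-(j^2+a*j+b)*\<tau> j)" for j
  define S where "S = (\<Sum>j\<in>X. smult (\<sigma> j) (lag X j))"
  have SP: "poly (SS (rr n)) x = (1-x^2)*(1 - (x^2+A (rr n)*x+B (rr n))*poly (TT (rr n)) x)" for n x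
    by (rule good_pointwise[OF good'])
  have Sconv: "(\<lambda>n. poly (SS (rr n)) x) \<longlonglongrightarrow> poly S x" for x
  proof -
    have e: "(\<lambda>n. poly (SS (rr n)) x) = (\<lambda>n. \<Sum>j\<in>X. poly (SS (rr n)) j * poly (lag X j) x)"
      by (rule ext, rule interp_poly[OF X(1) degS])
    have "(\<lambda>n. poly (SS (rr n)) j) \<longlonglongrightarrow> \<sigma> j" if "j \<in> X" for j
      unfolding SP \<sigma>_def using tau[OF that] cA' cB' by (intro tendsto_intros)
    hence "(\<lambda>n. \<Sum>j\<in>X. poly (SS (rr n)) j * poly (lag X j) x) \<longlonglongrightarrow> (\<Sum>j\<in>X. \<sigma> j * poly (lag X j) x)"
      by (intro tendsto_sum tendsto_mult_right) auto
    thus ?thesis unfolding e S_def by (simp add: poly_sum)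
  qed
  have SE: "poly S x = (1-x^2)*(1 - (x^2+a*x+b)*poly T x)" for x
  proof -
    have "(\<lambda>n. poly (SS (rr n)) x) \<longlonglongrightarrow> (1-x^2)*(1 - (x^2+a*x+b)*poly T x)"
      unfolding SP using Tconv[of x] cA' cB' by (intro tendsto_intros)
    thus ?thesis using Sconv[of x] LIMSEQ_unique by blast
  qed
  have T0: "poly T x \<ge> 0" for x
  proof (rule tendsto_lowerbound[OF Tconv])
    show "eventually (\<lambda>n. 0 \<le> poly (TT (rr n)) x) sequentially" using good' unfolding goodST_def by auto
  qed simp
  have S0: "poly S x \<ge> 0" for x
  proof (rule tendsto_lowerbound[OF Sconv])
    show "eventually (\<lambda>n. 0 \<le> poly (SS (rr n)) x) sequentially" using good' unfolding goodST_def by auto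
  qed simp
  have dS: "degree S \<le> 2*M" unfolding S_def
  proof (rule degree_sum_le[OF X(1)])
    fix j assume "j \<in> X"
    hence "degree (lag X j) \<le> 2*M" using degree_lag[OF X(1)] X(2) by fastforce
    thus "degree (smult (\<sigma> j) (lag X j)) \<le> 2*M" using degree_smult_le order.trans by blast
  qed
  have "poly (S + [:1,0,-1:] * hpoly a b * T) = poly [:1,0,-1:]"
    by (rule ext) (simp add: SE poly_hpoly algebra_simps power2_eq_square)
  hence "S + [:1,0,-1:] * hpoly a b * T = [:1,0,-1:]" by (simp add: poly_eq_poly_eq_iff)
  hence "goodST a b M S T" unfolding goodST_def using S0 T0 dS by blast
  thus ?thesis by blast
qed

lemma near_end:
  fixes g :: "real poly"
  assumes "poly g y0 > 0" "\<bar>y0\<bar> = 1"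
  shows "\<exists>x1. \<bar>x1\<bar> < 1 \<and> poly g x1 > 0"
proof -
  obtain d where d: "d > 0" "\<forall>y. \<bar>y - y0\<bar> < d \<longrightarrow> poly g y > 0" using sign_near[OF assms(1)] by blast
  define x1 where "x1 = y0 - y0 * (min d 1 / 2)"
  have "\<bar>x1 - y0\<bar> < d" unfolding x1_def using d(1) assms(2) by (auto simp: abs_mult)
  moreover have "\<bar>x1\<bar> < 1" unfolding x1_def using d(1) assms(2) by (cases "y0 \<ge> 0") auto
  ultimately show ?thesis using d(2) by blast
qed

theorem lemma4p5:
  fixes s :: "nat \<Rightarrow> real \<times> real" and a b :: real
  assumes inP: "\<forall>\<nu>. s \<nu> \<in> P_set"
    and conv: "s \<longlonglongrightarrow> (a, b)"
    and bdd: "bdd_above (range (\<lambda>\<nu>. N_ab (fst (s \<nu>)) (snd (s \<nu>))))"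
    and ne: "(a, b) \<noteq> (0, -1)"
  shows "(a, b) \<notin> P'_set \<and>
         ((a, b) \<in> P_set \<longrightarrow> N_ab a b \<le> (SUP \<nu>. N_ab (fst (s \<nu>)) (snd (s \<nu>))))"
proof -
  define A where "A \<nu> = fst (s \<nu>)" for \<nu>
  define B where "B \<nu> = snd (s \<nu>)" for \<nu>
  define M where "M = (SUP \<nu>. N_ab (fst (s \<nu>)) (snd (s \<nu>)))"
  have NM: "N_ab (A \<nu>) (B \<nu>) \<le> M" for \<nu>
    unfolding M_def A_def B_def using cSUP_upper[OF UNIV_I bdd] by simp
  have inP': "(A \<nu>, B \<nu>) \<in> P_set" for \<nu> using inP unfolding A_def B_def by simp
  have "\<forall>\<nu>. \<exists>S T. goodST (A \<nu>) (B \<nu>) M S T"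
  proof
    fix \<nu>
    have "sos_deg_C (A \<nu>) (B \<nu>) M ([:1,0,-1:], 0)"
      using sos_mono[OF N_spec[OF inP'] NM] .
    thus "\<exists>S T. goodST (A \<nu>) (B \<nu>) M S T" by (rule lemA)
  qed
  then obtain SS TT where good: "\<forall>\<nu>. goodST (A \<nu>) (B \<nu>) M (SS \<nu>) (TT \<nu>)" by metis
  have cA: "A \<longlonglongrightarrow> a" unfolding A_def using tendsto_fst[OF conv] by simp
  have cB: "B \<longlonglongrightarrow> b" unfolding B_def using tendsto_snd[OF conv] by simp
  have posn: "\<forall>\<nu> x. \<bar>x\<bar> \<ge> 1 \<longrightarrow> x^2 + A \<nu> * x + B \<nu> > 0" using inP' unfolding P_set_def by auto
  have P1: "(a, b) \<notin> P'_set"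
  proof
    assume "(a, b) \<in> P'_set"
    then consider "a^2 = 4*b" "4*b \<ge> 4" | "\<bar>a\<bar> = b + 1" "b + 1 \<le> 2" unfolding P'_set_def by auto
    thus False
    proof cases
      case 1
      have "a^2 \<ge> 2^2" using 1 by simp
      hence "\<bar>a\<bar> \<ge> 2" using abs_le_square_iff[of 2 a] by simp
      hence x0: "\<bar>-a/2\<bar> \<ge> 1" by simp
      have h0: "(-a/2)^2 + a*(-a/2) + b = 0" using 1 by (simp add: power2_eq_square field_simps)
      show False
        by (rule part1[OF good cA cB posn x0 h0, of 0]) (use 1 in auto)
    next
      case 2
      have bne: "b \<noteq> -1" using 2 ne by auto
      show False
      proof (cases "a \<ge> 0")
        case True
        hence ab: "a = b + 1" using 2 by simp
        have "poly (hpoly a b) 1 > 0" using 2 bne ab by (simp add: poly_hpoly)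
        then obtain x1 where x1: "\<bar>x1\<bar> < 1" "poly (hpoly a b) x1 > 0" using near_end[of "hpoly a b" 1] by auto
        show False
          by (rule part1[OF good cA cB posn, of "-1" x1]) (use ab x1 in \<open>auto simp: poly_hpoly\<close>)
      next
        case False
        hence ab: "a = -(b + 1)" using 2 by simp
        have "poly (hpoly a b) (-1) > 0" using 2 bne ab by (simp add: poly_hpoly)
        then obtain x1 where x1: "\<bar>x1\<bar> < 1" "poly (hpoly a b) x1 > 0" using near_end[of "hpoly a b" "-1"] by auto
        show False
          by (rule part1[OF good cA cB posn, of "1" x1]) (use ab x1 in \<open>auto simp: poly_hpoly\<close>)
      qed
    qed
  qed
  have P2: "N_ab a b \<le> M" if abP: "(a, b) \<in> P_set"
  proof -
    obtain S T where "goodST a b M S T" using part2[OF good cA cB abP] by blast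
    hence "sos_deg_C a b M ([:1,0,-1:], 0)" by (rule lemB)
    thus ?thesis by (rule N_le)
  qed
  show ?thesis using P1 P2 unfolding M_def by blast
qed

end
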